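(* Let $\xi>0$ be real, let $b\ge0$ and $N\ge2$ be integers, and for integers $0\le d\le N-1$ and $0\le l\le 2d$ put \begin{equation*} f_{d,l} = \exp\left(\frac{(2b+1)(d^2+d)\xi}{2N}\right) \cdot 2\sinh\left(\frac{(2d+1)\xi}{2N}\right) \cdot \prod_{k=1}^{l}4 \sinh\left(\frac{(2d+1+k)\xi}{2N}\right) \sinh\left(\frac{(2d+1-k)\xi}{2N}\right). \end{equation*} Define $S:=(-1)^{N-1}\sum_{d=0}^{N-1}\sum_{l=0}^{2d}(-1)^{d}f_{d,l}$. Then \begin{equation*} S>(1-e^{-\xi/2})\sum_{l=0}^{2N-2}f_{N-1,l}. \end{equation*} *)

theory Defs
  imports Complex_Main
begin

definition f_dl :: "real \<Rightarrow> nat \<Rightarrow> nat \<Rightarrow> nat \<Rightarrow> nat \<Rightarrow> real" where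
  "f_dl \<xi> b N d l =
     exp ((2 * real b + 1) * (real d ^ 2 + real d) * \<xi> / (2 * real N))
     * (2 * sinh ((2 * real d + 1) * \<xi> / (2 * real N)))
     * (\<Prod>k = 1..l. 4 * sinh ((2 * real d + 1 + real k) * \<xi> / (2 * real N))
                     * sinh ((2 * real d + 1 - real k) * \<xi> / (2 * real N)))"

definition S_sum :: "real \<Rightarrow> nat \<Rightarrow> nat \<Rightarrow> real" where
  "S_sum \<xi> b N = (-1) ^ (N - 1) * (\<Sum>d = 0..N-1. \<Sum>l = 0..2*d. (-1) ^ d * f_dl \<xi> b N d l)"

end

theory Submission
  imports Defs
begin

lemma f_pos:
  assumes "\<xi> > 0" "N \<ge> 1" "l \<le> 2 * d"
  shows "f_dl \<xi> b N d l > 0"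
proof -
  have N: "real N > 0" using assms by simp
  have "(\<Prod>k = 1..l. 4 * sinh ((2 * real d + 1 + real k) * \<xi> / (2 * real N))
                     * sinh ((2 * real d + 1 - real k) * \<xi> / (2 * real N))) > 0"
  proof (rule prod_pos)
    fix k assume k: "k \<in> {1..l}"
    then have "real k \<le> 2 * real d" using assms by auto
    then have a: "(2 * real d + 1 - real k) > 0" by linarith
    have b: "(2 * real d + 1 + real k) > 0" by linarith
    show "4 * sinh ((2 * real d + 1 + real k) * \<xi> / (2 * real N))
                     * sinh ((2 * real d + 1 - real k) * \<xi> / (2 * real N)) > 0"
      using a b N assms(1) by (simp add: mult_pos_pos)
  qed
  moreover have "2 * sinh ((2 * real d + 1) * \<xi> / (2 * real N)) > 0"
    using N assms(1) by (simp add: add_pos_nonneg)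
  ultimately show ?thesis unfolding f_dl_def by simp
qed

lemma f_step:
  assumes "\<xi> > 0" "N \<ge> 1" "l \<le> 2 * e"
  shows "exp (2 * (real e + 1) * (\<xi> / (2 * real N))) * f_dl \<xi> b N e l \<le> f_dl \<xi> b N (Suc e) l"
proof -
  define x where "x = \<xi> / (2 * real N)"
  have x: "x > 0" using assms unfolding x_def by simp
  have fx: "f_dl \<xi> b N d l' =
     exp ((2 * real b + 1) * (real d ^ 2 + real d) * x)
     * (2 * sinh ((2 * real d + 1) * x))
     * (\<Prod>k = 1..l'. 4 * sinh ((2 * real d + 1 + real k) * x)
                     * sinh ((2 * real d + 1 - real k) * x))" for d l'
    unfolding f_dl_def x_def by (simp add: field_simps)
  have P: "(\<Prod>k = 1..l. 4 * sinh ((2 * real e + 1 + real k) * x)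
                     * sinh ((2 * real e + 1 - real k) * x))
        \<le> (\<Prod>k = 1..l. 4 * sinh ((2 * real (Suc e) + 1 + real k) * x)
                     * sinh ((2 * real (Suc e) + 1 - real k) * x))"
  proof (rule prod_mono, rule conjI)
    fix k assume k: "k \<in> {1..l}"
    then have "real k \<le> 2 * real e" using assms by auto
    then have a: "(2 * real e + 1 - real k) > 0" by linarith
    have b: "(2 * real e + 1 + real k) > 0" by linarith
    have s1: "0 < sinh ((2 * real e + 1 + real k) * x)" using b x by simp
    have s2: "0 < sinh ((2 * real e + 1 - real k) * x)" using a x by simp
    show "0 \<le> 4 * sinh ((2 * real e + 1 + real k) * x) * sinh ((2 * real e + 1 - real k) * x)"
      using s1 s2 by simp
    have m1: "sinh ((2 * real e + 1 + real k) * x) \<le> sinh ((2 * real (Suc e) + 1 + real k) * x)"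
      using x by simp
    have m2: "sinh ((2 * real e + 1 - real k) * x) \<le> sinh ((2 * real (Suc e) + 1 - real k) * x)"
      using x by simp
    have "sinh ((2 * real e + 1 + real k) * x) * sinh ((2 * real e + 1 - real k) * x)
       \<le> sinh ((2 * real (Suc e) + 1 + real k) * x) * sinh ((2 * real (Suc e) + 1 - real k) * x)"
      by (rule mult_mono[OF m1 m2]) (use s1 s2 m1 in auto)
    then show "4 * sinh ((2 * real e + 1 + real k) * x) * sinh ((2 * real e + 1 - real k) * x)
       \<le> 4 * sinh ((2 * real (Suc e) + 1 + real k) * x) * sinh ((2 * real (Suc e) + 1 - real k) * x)"
      by simp
  qed
  have Ppos: "0 \<le> (\<Prod>k = 1..l. 4 * sinh ((2 * real e + 1 + real k) * x)
                     * sinh ((2 * real e + 1 - real k) * x))"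
  proof (rule prod_nonneg)
    fix k assume k: "k \<in> {1..l}"
    then have "real k \<le> 2 * real e" using assms by auto
    then have a: "(2 * real e + 1 - real k) > 0" by linarith
    have b: "(2 * real e + 1 + real k) > 0" by linarith
    show "0 \<le> 4 * sinh ((2 * real e + 1 + real k) * x) * sinh ((2 * real e + 1 - real k) * x)"
      using a b x by simp
  qed
  have S: "2 * sinh ((2 * real e + 1) * x) \<le> 2 * sinh ((2 * real (Suc e) + 1) * x)"
    using x by simp
  have Spos: "0 \<le> 2 * sinh ((2 * real e + 1) * x)" using x by simp
  have E: "exp (2 * (real e + 1) * x) * exp ((2 * real b + 1) * (real e ^ 2 + real e) * x)
      \<le> exp ((2 * real b + 1) * (real (Suc e) ^ 2 + real (Suc e)) * x)"
  proof -
    have "exp (2 * (real e + 1) * x) * exp ((2 * real b + 1) * (real e ^ 2 + real e) * x)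
       = exp (2 * (real e + 1) * x + (2 * real b + 1) * (real e ^ 2 + real e) * x)"
      by (simp add: exp_add)
    also have "\<dots> \<le> exp ((2 * real b + 1) * (real (Suc e) ^ 2 + real (Suc e)) * x)"
    proof (subst exp_le_cancel_iff)
      have "2 * (real e + 1) * x \<le> (2 * real b + 1) * (2 * (real e + 1)) * x"
        using x by (intro mult_right_mono) auto
      then show "2 * (real e + 1) * x + (2 * real b + 1) * (real e ^ 2 + real e) * x
          \<le> (2 * real b + 1) * (real (Suc e) ^ 2 + real (Suc e)) * x"
        by (simp add: power2_eq_square algebra_simps)
    qed
    finally show ?thesis .
  qed
  have "exp (2 * (real e + 1) * x) * f_dl \<xi> b N e l
     = (exp (2 * (real e + 1) * x) * exp ((2 * real b + 1) * (real e ^ 2 + real e) * x))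
       * (2 * sinh ((2 * real e + 1) * x))
       * (\<Prod>k = 1..l. 4 * sinh ((2 * real e + 1 + real k) * x)
                     * sinh ((2 * real e + 1 - real k) * x))"
    unfolding fx by (simp add: mult.assoc)
  also have "\<dots> \<le> f_dl \<xi> b N (Suc e) l"
    unfolding fx[of "Suc e"]
    using x by (intro mult_mono E S P Spos Ppos mult_nonneg_nonneg) (auto intro!: mult_right_mono)
  finally show ?thesis unfolding x_def .
qed


definition FF :: "real \<Rightarrow> nat \<Rightarrow> nat \<Rightarrow> nat \<Rightarrow> real" where
  "FF \<xi> b N d = (\<Sum>l = 0..2*d. f_dl \<xi> b N d l)"

lemma FF_pos:
  assumes "\<xi> > 0" "N \<ge> 1"
  shows "FF \<xi> b N d > 0"
  unfolding FF_def using f_pos[OF assms]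
  by (intro sum_pos) auto

lemma FF_step:
  assumes "\<xi> > 0" "N \<ge> 1"
  shows "exp (2 * (real e + 1) * (\<xi> / (2 * real N))) * FF \<xi> b N e < FF \<xi> b N (Suc e)"
proof -
  have "exp (2 * (real e + 1) * (\<xi> / (2 * real N))) * FF \<xi> b N e
      = (\<Sum>l = 0..2*e. exp (2 * (real e + 1) * (\<xi> / (2 * real N))) * f_dl \<xi> b N e l)"
    unfolding FF_def by (simp add: sum_distrib_left)
  also have "\<dots> \<le> (\<Sum>l = 0..2*e. f_dl \<xi> b N (Suc e) l)"
    using f_step[OF assms] by (intro sum_mono) auto
  also have "\<dots> < (\<Sum>l = 0..2*e. f_dl \<xi> b N (Suc e) l) + f_dl \<xi> b N (Suc e) (Suc (2*e))
       + f_dl \<xi> b N (Suc e) (Suc (Suc (2*e)))"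
    using f_pos[OF assms, of "Suc (2*e)" "Suc e" b] f_pos[OF assms, of "Suc (Suc (2*e))" "Suc e" b]
    by simp
  also have "\<dots> = FF \<xi> b N (Suc e)"
    unfolding FF_def by (simp add: sum.atLeast0_atMost_Suc)
  finally show ?thesis .
qed

lemma FF_mono:
  assumes "\<xi> > 0" "N \<ge> 1"
  shows "FF \<xi> b N e \<le> FF \<xi> b N (Suc e)"
proof -
  have "1 \<le> exp (2 * (real e + 1) * (\<xi> / (2 * real N)))" using assms by simp
  then have "FF \<xi> b N e \<le> exp (2 * (real e + 1) * (\<xi> / (2 * real N))) * FF \<xi> b N e"
    using FF_pos[OF assms, of b e] by simp
  then show ?thesis using FF_step[OF assms, of e b] by simp
qed

lemma alt_bound:
  assumes "\<xi> > 0" "N \<ge> 1"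
  shows "0 \<le> (-1)^m * (\<Sum>d = 0..m. (-1)^d * FF \<xi> b N d)
     \<and> (-1)^m * (\<Sum>d = 0..m. (-1)^d * FF \<xi> b N d) \<le> FF \<xi> b N m"
proof (induction m)
  case 0
  then show ?case using FF_pos[OF assms, of b 0] by simp
next
  case (Suc m)
  have eq: "(-1::real)^(Suc m) * (\<Sum>d = 0..Suc m. (-1)^d * FF \<xi> b N d)
     = FF \<xi> b N (Suc m) - (-1)^m * (\<Sum>d = 0..m. (-1)^d * FF \<xi> b N d)"
    by (simp add: algebra_simps)
  show ?case unfolding eq using Suc FF_mono[OF assms, where e=m and b=b] by linarith
qed

theorem lemma3p3:
  fixes \<xi> :: real and b N :: nat
  assumes "\<xi> > 0" and "N \<ge> 2"
  shows "S_sum \<xi> b N > (1 - exp (- \<xi> / 2)) * (\<Sum>l = 0..2*N-2. f_dl \<xi> b N (N - 1) l)"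
proof -
  have N1: "N \<ge> 1" using assms by simp
  obtain m where m: "N = Suc (Suc m)" using assms(2) by (metis add_2_eq_Suc le_Suc_ex)
  have idx: "N - 1 = Suc m" "2*N-2 = 2 * Suc m" using m by auto
  have S: "S_sum \<xi> b N = (-1)^(Suc m) * (\<Sum>d = 0..Suc m. (-1)^d * FF \<xi> b N d)"
    unfolding S_sum_def FF_def idx by (simp add: sum_distrib_left)
  have S2: "S_sum \<xi> b N = FF \<xi> b N (Suc m) - (-1)^m * (\<Sum>d = 0..m. (-1)^d * FF \<xi> b N d)"
    unfolding S by (simp add: algebra_simps)
  have A: "(-1)^m * (\<Sum>d = 0..m. (-1)^d * FF \<xi> b N d) \<le> FF \<xi> b N m"
    using alt_bound[OF assms(1) N1, of m b] by simp
  have st: "exp (2 * (real m + 1) * (\<xi> / (2 * real N))) * FF \<xi> b N m < FF \<xi> b N (Suc m)"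
    by (rule FF_step[OF assms(1) N1])
  have "\<xi> / 2 \<le> 2 * (real m + 1) * (\<xi> / (2 * real N))"
    using assms(1) m by (simp add: field_simps)
  then have "exp (\<xi> / 2) \<le> exp (2 * (real m + 1) * (\<xi> / (2 * real N)))" by simp
  then have "exp (\<xi> / 2) * FF \<xi> b N m < FF \<xi> b N (Suc m)"
    using st FF_pos[OF assms(1) N1, of b m] by (meson le_less_trans mult_right_mono less_imp_le)
  then have "FF \<xi> b N m < exp (- \<xi> / 2) * FF \<xi> b N (Suc m)"
    by (simp add: exp_minus field_simps)
  moreover have "(\<Sum>l = 0..2*N-2. f_dl \<xi> b N (N - 1) l) = FF \<xi> b N (Suc m)"
    unfolding FF_def idx ..
  ultimately show ?thesis unfolding S2 using A by (simp add: algebra_simps)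
qed

end
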